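(* Let $(\vdash,\overline{\cdot},\widehat{\cdot})$ be a setting satisfying Pre-Relevance, let $\mathcal{S},\mathcal{S}'\subseteq\mathcal{L}$ with $\mathcal{S}\mid\mathcal{S}'$, let $\mathsf{Sem}\in\{\mathsf{Cmp},\mathsf{Prf},\mathsf{Grd}\}$, and let $\mathcal{E}_1\in\mathsf{Sem}(\mathcal{AF}_{\vdash}(\mathcal{S}))$. Then there is an $\mathcal{E}\in\mathsf{Sem}(\mathcal{AF}_{\vdash}(\mathcal{S}\cup\mathcal{S}'))$ with $\mathcal{E}_1=\mathcal{E}\cap\mathit{Arg}_{\vdash}(\mathcal{S})$.
   Context: $\mathcal{L}$ is the set of formulas of a language built from propositional atoms; $\mathsf{Atoms}(\mathcal{S})$ is the set of atoms occurring in $\mathcal{S}$, and $\mathcal{S}_1\mid\mathcal{S}_2$ means $\mathsf{Atoms}(\mathcal{S}_1)\cap\mathsf{Atoms}(\mathcal{S}_2)=\emptyset$. A setting is $(\vdash,\overline{\cdot},\widehat{\cdot})$ with ${\vdash}\subseteq\wp_{\sf fin}(\mathcal{L})\times\mathcal{L}$ arbitrary, $\overline{\cdot}:\mathcal{L}\to\wp(\mathcal{L})$, $\widehat{\cdot}$ assigning to each nonempty finite set a finite set of formulas, with $\widehat{\emptyset}=\emptyset$. $\mathit{Arg}_{\vdash}(\mathcal{S})=\{(\Gamma,\gamma):\Gamma\subseteq\mathcal{S}\text{ finite},\Gamma\vdash\gamma\}$; $\mathcal{AF}_{\vdash}(\mathcal{S})$ is the attack graph on it where $(\Gamma,\gamma)$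 attacks $(\Gamma',\gamma')$ iff $\gamma\in\overline{\phi}$ for some $\phi\in\widehat{\Gamma'}$. Complete extension = conflict-free set defending each member (every attacker of a member is attacked by a member) and containing every argument it defends; $\mathsf{Cmp}(\cdot)$ is the set of complete extensions, $\mathsf{Prf}(\cdot)$ the $\subseteq$-maximal ones, and $\mathsf{Grd}(\cdot)$ the singleton containing the $\subseteq$-minimal one. Pre-Relevance of the setting: (a) for all $\mathcal{S}_1,\mathcal{S}_2,\phi$ with $\mathcal{S}_1\cup\{\phi\}\mid\mathcal{S}_2$, $\mathcal{S}_1\cup\mathcal{S}_2\vdash\phi$ implies $\mathcal{S}_1'\vdash\phi$ for some $\mathcal{S}_1'\subseteq\mathcal{S}_1$; (b) primeness: for all sets of atoms $\mathcal{A}_1\mid\mathcal{A}_2$, all finite $\mathcal{S}_1,\mathcal{T}_1,\mathcal{S}_2,\mathcal{T}_2$ with $\mathsf{Atoms}(\mathcal{S}_i),\mathsf{Atoms}(\mathcal{T}_i)\subseteq\mathcal{A}_i$, and all $\phi,\psi$ with $\psi\in\overline{\phi}$, $\phi\in\widehat{\mathcal{T}_1\cup\mathcal{T}_2}$: if $\mathcal{S}_1\cup\mathcal{S}_2\vdash\psi$ then there are $i\in\{1,2\}$, $\mathcal{S}_i'\subseteq\mathcal{S}_i$, $\phi_i\in\widehat{\mathcal{T}_i}$, $\psi_i\in\overline{\phi_i}$ with $\mathcal{S}_i'\vdash\psi_i$; (c) $\widehat{\Delta}\subseteq\widehat{\Delta\cup\Delta'}$ for all finite $\Delta,\Delta'$.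 *)

theory Defs
  imports Main
begin

text \<open>A setting is (vd, ctr, hat): vd Gamma gamma means Gamma |- gamma
 (only finite Gamma are relevant), ctr = contrariness overline, hat = hat operator.\<close>

definition Atoms :: "('f \<Rightarrow> 'a set) \<Rightarrow> 'f set \<Rightarrow> 'a set" where
  "Atoms atoms S = (\<Union>\<phi>\<in>S. atoms \<phi>)"

definition indep :: "('f \<Rightarrow> 'a set) \<Rightarrow> 'f set \<Rightarrow> 'f set \<Rightarrow> bool" where
  "indep atoms S1 S2 \<longleftrightarrow> Atoms atoms S1 \<inter> Atoms atoms S2 = {}"

definition setting :: "('f set \<Rightarrow> 'f set) \<Rightarrow> bool" where
  "setting hat \<longleftrightarrow> hat {} = {} \<and> (\<forall>\<Delta>. finite \<Delta> \<and> \<Delta> \<noteq> {} \<longrightarrow> finite (hat \<Delta>))"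

definition pre_relevance ::
  "('f \<Rightarrow> 'a set) \<Rightarrow> ('f set \<Rightarrow> 'f \<Rightarrow> bool) \<Rightarrow> ('f \<Rightarrow> 'f set) \<Rightarrow> ('f set \<Rightarrow> 'f set) \<Rightarrow> bool"
  where
  "pre_relevance atoms vd ctr hat \<longleftrightarrow>
    (\<forall>S1 S2 \<phi>. finite S1 \<and> finite S2 \<and> indep atoms (S1 \<union> {\<phi>}) S2 \<and> vd (S1 \<union> S2) \<phi>
        \<longrightarrow> (\<exists>S1'. S1' \<subseteq> S1 \<and> vd S1' \<phi>))
  \<and> (\<forall>A1 A2 S1 T1 S2 T2 \<phi> \<psi>.
        A1 \<inter> A2 = {} \<and> finite S1 \<and> finite T1 \<and> finite S2 \<and> finite T2 \<and>
        Atoms atoms S1 \<subseteq> A1 \<and> Atoms atoms T1 \<subseteq> A1 \<and>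
        Atoms atoms S2 \<subseteq> A2 \<and> Atoms atoms T2 \<subseteq> A2 \<and>
        \<psi> \<in> ctr \<phi> \<and> \<phi> \<in> hat (T1 \<union> T2) \<and> vd (S1 \<union> S2) \<psi>
        \<longrightarrow> (\<exists>S1' \<phi>1 \<psi>1. S1' \<subseteq> S1 \<and> \<phi>1 \<in> hat T1 \<and> \<psi>1 \<in> ctr \<phi>1 \<and> vd S1' \<psi>1)
          \<or> (\<exists>S2' \<phi>2 \<psi>2. S2' \<subseteq> S2 \<and> \<phi>2 \<in> hat T2 \<and> \<psi>2 \<in> ctr \<phi>2 \<and> vd S2' \<psi>2))
  \<and> (\<forall>\<Delta> \<Delta>'. finite \<Delta> \<and> finite \<Delta>' \<longrightarrow> hat \<Delta> \<subseteq> hat (\<Delta> \<union> \<Delta>'))"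

definition Arg :: "('f set \<Rightarrow> 'f \<Rightarrow> bool) \<Rightarrow> 'f set \<Rightarrow> ('f set \<times> 'f) set" where
  "Arg vd S = {(\<Gamma>, \<gamma>). finite \<Gamma> \<and> \<Gamma> \<subseteq> S \<and> vd \<Gamma> \<gamma>}"

definition attacks :: "('f \<Rightarrow> 'f set) \<Rightarrow> ('f set \<Rightarrow> 'f set) \<Rightarrow> ('f set \<times> 'f) \<Rightarrow> ('f set \<times> 'f) \<Rightarrow> bool" where
  "attacks ctr hat a b \<longleftrightarrow> (\<exists>\<phi>\<in>hat (fst b). snd a \<in> ctr \<phi>)"

definition conflict_free :: "('x \<Rightarrow> 'x \<Rightarrow> bool) \<Rightarrow> 'x set \<Rightarrow> bool" where
  "conflict_free R E \<longleftrightarrow> (\<forall>a\<in>E. \<forall>b\<in>E. \<not> R a b)"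

definition defends :: "'x set \<Rightarrow> ('x \<Rightarrow> 'x \<Rightarrow> bool) \<Rightarrow> 'x set \<Rightarrow> 'x \<Rightarrow> bool" where
  "defends A R E a \<longleftrightarrow> (\<forall>b\<in>A. R b a \<longrightarrow> (\<exists>c\<in>E. R c b))"

definition complete_ext :: "'x set \<Rightarrow> ('x \<Rightarrow> 'x \<Rightarrow> bool) \<Rightarrow> 'x set \<Rightarrow> bool" where
  "complete_ext A R E \<longleftrightarrow> E \<subseteq> A \<and> conflict_free R E \<and>
     (\<forall>a\<in>E. defends A R E a) \<and> (\<forall>a\<in>A. defends A R E a \<longrightarrow> a \<in> E)"

definition preferred_ext :: "'x set \<Rightarrow> ('x \<Rightarrow> 'x \<Rightarrow> bool) \<Rightarrow> 'x set \<Rightarrow> bool" where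
  "preferred_ext A R E \<longleftrightarrow> complete_ext A R E \<and>
     (\<forall>E'. complete_ext A R E' \<and> E \<subseteq> E' \<longrightarrow> E' = E)"

definition grounded_ext :: "'x set \<Rightarrow> ('x \<Rightarrow> 'x \<Rightarrow> bool) \<Rightarrow> 'x set \<Rightarrow> bool" where
  "grounded_ext A R E \<longleftrightarrow> complete_ext A R E \<and>
     (\<forall>E'. complete_ext A R E' \<longrightarrow> E \<subseteq> E')"

datatype semantics = Cmp | Prf | Grd

fun ext :: "semantics \<Rightarrow> 'x set \<Rightarrow> ('x \<Rightarrow> 'x \<Rightarrow> bool) \<Rightarrow> 'x set \<Rightarrow> bool" where
  "ext Cmp = complete_ext"
| "ext Prf = preferred_ext"
| "ext Grd = grounded_ext"

definition Sem :: "semantics \<Rightarrow> ('f set \<Rightarrow> 'f \<Rightarrow> bool) \<Rightarrow> ('f \<Rightarrow> 'f set) \<Rightarrow> ('f set \<Rightarrow> 'f set)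
   \<Rightarrow> 'f set \<Rightarrow> ('f set \<times> 'f) set set" where
  "Sem s vd ctr hat S = {E. ext s (Arg vd S) (attacks ctr hat) E}"

end

theory Submission
  imports Defs
begin


lemma defends_mono: "X \<subseteq> Y \<Longrightarrow> defends A R X a \<Longrightarrow> defends A R Y a"
  unfolding defends_def by blast

lemma adm_insert:
  assumes cf: "conflict_free R M" and adm: "\<forall>b\<in>M. defends A R M b" and MA: "M \<subseteq> A"
    and aA: "a \<in> A" and da: "defends A R M a"
  shows "conflict_free R (insert a M) \<and> (\<forall>b\<in>insert a M. defends A R (insert a M) b)"
proof
  show "conflict_free R (insert a M)"
    unfolding conflict_free_def
  proof (intro ballI notI)
    fix x y assume x: "x \<in> insert a M" and y: "y \<in> insert a M" and xy: "R x y"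
    have xA: "x \<in> A" using x MA aA by blast
    obtain c where c: "c \<in> M" "R c x"
    proof (cases "y = a")
      case True thus ?thesis using da xA xy that unfolding defends_def by blast
    next
      case False thus ?thesis using y adm xA xy that unfolding defends_def by blast
    qed
    show False
    proof (cases "x = a")
      case True
      then obtain d where "d \<in> M" "R d c" using da c MA unfolding defends_def by blast
      thus False using cf c unfolding conflict_free_def by blast
    next
      case False
      hence "x \<in> M" using x by blast
      thus False using cf c unfolding conflict_free_def by blast
    qed
  qed
  show "\<forall>b\<in>insert a M. defends A R (insert a M) b"
    using adm da defends_mono[of M "insert a M"] by blast
qed

lemma exists_preferred:
  assumes "E0 \<subseteq> A" "conflict_free R E0" "\<forall>a\<in>E0. defends A R E0 a"
  shows "\<exists>E. preferred_ext A R E \<and> E0 \<subseteq> E"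
proof -
  define AA where "AA = {X. E0 \<subseteq> X \<and> X \<subseteq> A \<and> conflict_free R X \<and> (\<forall>a\<in>X. defends A R X a)}"
  have "\<forall>C\<in>chains AA. \<exists>U\<in>AA. \<forall>X\<in>C. X \<subseteq> U"
  proof
    fix C assume C: "C \<in> chains AA"
    have CA: "C \<subseteq> AA" using chainsD2[OF C] .
    let ?U = "E0 \<union> \<Union>C"
    have ch: "\<And>X Y. X \<in> insert E0 C \<Longrightarrow> Y \<in> insert E0 C \<Longrightarrow> X \<subseteq> Y \<or> Y \<subseteq> X"
      using chainsD[OF C] CA unfolding AA_def by blast
    have "?U \<in> AA"
      unfolding AA_def
    proof (intro CollectI conjI)
      show "E0 \<subseteq> ?U" by blast
      show "?U \<subseteq> A" using assms(1) CA unfolding AA_def by blast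
      show "conflict_free R ?U" unfolding conflict_free_def
      proof (intro ballI)
        fix x y assume "x \<in> ?U" "y \<in> ?U"
        then obtain X Y where XY: "X \<in> insert E0 C" "Y \<in> insert E0 C" "x \<in> X" "y \<in> Y" by blast
        have cfX: "\<And>Z. Z \<in> insert E0 C \<Longrightarrow> conflict_free R Z" using assms(2) CA unfolding AA_def by blast
        from ch[OF XY(1,2)] show "\<not> R x y"
          using cfX[OF XY(1)] cfX[OF XY(2)] XY unfolding conflict_free_def by blast
      qed
      show "\<forall>a\<in>?U. defends A R ?U a"
      proof
        fix a assume "a \<in> ?U"
        then obtain X where X: "X \<in> insert E0 C" "a \<in> X" by blast
        have "defends A R X a" using X assms(3) CA unfolding AA_def by blast
        thus "defends A R ?U a" by (rule defends_mono[rotated]) (use X in blast)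
      qed
    qed
    moreover have "\<forall>X\<in>C. X \<subseteq> ?U" by blast
    ultimately show "\<exists>U\<in>AA. \<forall>X\<in>C. X \<subseteq> U" by (rule bexI[rotated])
  qed
  from Zorn_Lemma2[OF this] obtain M where M: "M \<in> AA" and mx: "\<forall>X\<in>AA. M \<subseteq> X \<longrightarrow> X = M" by blast
  have cm: "complete_ext A R M"
    unfolding complete_ext_def
  proof (intro conjI ballI impI)
    show "M \<subseteq> A" "conflict_free R M" using M unfolding AA_def by auto
    show "\<And>a. a \<in> M \<Longrightarrow> defends A R M a" using M unfolding AA_def by auto
    fix a assume a: "a \<in> A" "defends A R M a"
    have MM: "E0 \<subseteq> M" "M \<subseteq> A" "conflict_free R M" "\<forall>b\<in>M. defends A R M b" using M unfolding AA_def by auto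
    have "insert a M \<in> AA" using adm_insert[OF MM(3,4,2) a] MM(1,2) a(1) unfolding AA_def by blast
    thus "a \<in> M" using mx by blast
  qed
  have "preferred_ext A R M"
    unfolding preferred_ext_def
  proof (intro conjI allI impI cm)
    fix E' assume "complete_ext A R E' \<and> M \<subseteq> E'"
    hence "E0 \<subseteq> E'" using M unfolding AA_def by blast
    hence "E' \<in> AA" using \<open>complete_ext A R E' \<and> M \<subseteq> E'\<close> unfolding AA_def complete_ext_def by blast
    thus "E' = M" using mx \<open>complete_ext A R E' \<and> M \<subseteq> E'\<close> by blast
  qed
  moreover have "E0 \<subseteq> M" using M unfolding AA_def by simp
  ultimately show ?thesis by (intro exI conjI)
qed

lemma exists_grounded: "\<exists>E. grounded_ext A R E"
proof -
  define F where "F = (\<lambda>X. {a\<in>A. defends A R X a})"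
  have mono: "mono F"
  proof (rule monoI)
    fix X Y :: "'a set" assume "X \<subseteq> Y"
    thus "F X \<subseteq> F Y" unfolding F_def using defends_mono[of X Y A R] by blast
  qed
  define L where "L = lfp F"
  have LF: "L = F L" unfolding L_def using lfp_unfold[OF mono] .
  have low: "L \<subseteq> E'" if "complete_ext A R E'" for E'
  proof -
    have "F E' \<subseteq> E'" using that unfolding F_def complete_ext_def by blast
    thus ?thesis unfolding L_def by (rule lfp_lowerbound)
  qed
  have "conflict_free R {}" unfolding conflict_free_def by simp
  then obtain P where "preferred_ext A R P"
    using exists_preferred[of "{}" A R] by blast
  hence P: "complete_ext A R P" unfolding preferred_ext_def by blast
  have LP: "L \<subseteq> P" using low[OF P] .
  have cfP: "conflict_free R P" using P unfolding complete_ext_def by blast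
  have "complete_ext A R L"
    unfolding complete_ext_def
  proof (intro conjI)
    show "L \<subseteq> A" using LF unfolding F_def by blast
    show "conflict_free R L" using LP cfP unfolding conflict_free_def by blast
    show "\<forall>a\<in>L. defends A R L a" using LF unfolding F_def by blast
    show "\<forall>a\<in>A. defends A R L a \<longrightarrow> a \<in> L" using LF unfolding F_def by blast
  qed
  thus ?thesis using low unfolding grounded_ext_def by blast
qed



lemma Atoms_mono: "X \<subseteq> Y \<Longrightarrow> Atoms atoms X \<subseteq> Atoms atoms Y"
  unfolding Atoms_def by blast

lemma Arg_mono: "S \<subseteq> T \<Longrightarrow> Arg vd S \<subseteq> Arg vd T"
  unfolding Arg_def by blast

lemma Arg_iff: "(a \<in> Arg vd S) = (finite (fst a) \<and> fst a \<subseteq> S \<and> vd (fst a) (snd a))"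
  unfolding Arg_def by (cases a) auto

lemma attacks_iff: "attacks ctr hat a b = (\<exists>\<phi>\<in>hat (fst b). snd a \<in> ctr \<phi>)"
  unfolding attacks_def by simp

locale RL =
  fixes atoms :: "'f \<Rightarrow> 'a set" and vd :: "'f set \<Rightarrow> 'f \<Rightarrow> bool"
    and ctr :: "'f \<Rightarrow> 'f set" and hat :: "'f set \<Rightarrow> 'f set" and S S' :: "'f set"
  assumes st: "setting hat" and pr: "pre_relevance atoms vd ctr hat" and ind: "indep atoms S S'"
begin

abbreviation "att \<equiv> attacks ctr hat"

lemma hat_empty: "hat {} = {}" using st unfolding setting_def by blast

lemma hat_mono: "finite \<Gamma> \<Longrightarrow> \<Gamma>' \<subseteq> \<Gamma> \<Longrightarrow> hat \<Gamma>' \<subseteq> hat \<Gamma>"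
proof -
  assume a: "finite \<Gamma>" "\<Gamma>' \<subseteq> \<Gamma>"
  hence f: "finite \<Gamma>'" using finite_subset by blast
  have e: "\<Gamma>' \<union> \<Gamma> = \<Gamma>" using a(2) by blast
  have H: "\<forall>\<Delta> \<Delta>'. finite \<Delta> \<and> finite \<Delta>' \<longrightarrow> hat \<Delta> \<subseteq> hat (\<Delta> \<union> \<Delta>')"
    using pr unfolding pre_relevance_def by (elim conjE)
  have "hat \<Gamma>' \<subseteq> hat (\<Gamma>' \<union> \<Gamma>)" using H f a(1) by blast
  thus ?thesis unfolding e .
qed

lemma att_mono: "att c (\<Gamma>', x) \<Longrightarrow> \<Gamma>' \<subseteq> \<Gamma> \<Longrightarrow> finite \<Gamma> \<Longrightarrow> att c (\<Gamma>, y)"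
  unfolding attacks_def using hat_mono[of \<Gamma> \<Gamma>'] by auto

lemma att_mono': "att c r \<Longrightarrow> fst r \<subseteq> fst b \<Longrightarrow> finite (fst b) \<Longrightarrow> att c b"
proof -
  assume a: "att c r" "fst r \<subseteq> fst b" "finite (fst b)"
  then obtain \<phi> where "\<phi> \<in> hat (fst r)" "snd c \<in> ctr \<phi>" unfolding attacks_def by blast
  moreover have "hat (fst r) \<subseteq> hat (fst b)" using hat_mono a(2,3) by blast
  ultimately show "att c b" unfolding attacks_def by blast
qed

lemma no_att_empty: "\<not> att c ({}, x)"
  unfolding attacks_def by (simp add: hat_empty)

lemma defends_snd: "defends A att X (\<Delta>, x) = defends A att X (\<Delta>, y)"
  unfolding defends_def attacks_def by simp

lemma defends_anti: "finite \<Delta> \<Longrightarrow> \<Delta>' \<subseteq> \<Delta> \<Longrightarrow> defends A att X (\<Delta>, x) \<Longrightarrow> defends A att X (\<Delta>', y)"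
  unfolding defends_def using att_mono by blast

lemma defends_empty: "defends A att X ({}, x)"
  unfolding defends_def using no_att_empty by blast

lemma prime_gen:
  assumes "finite \<Gamma>" "\<Gamma> \<subseteq> S \<union> S'" "vd \<Gamma> \<psi>" "finite \<Delta>1" "\<Delta>1 \<subseteq> S" "finite \<Delta>2" "\<Delta>2 \<subseteq> S'"
    "\<phi> \<in> hat (\<Delta>1 \<union> \<Delta>2)" "\<psi> \<in> ctr \<phi>"
  shows "(\<exists>S1' \<phi>1 \<psi>1. S1' \<subseteq> \<Gamma> \<inter> S \<and> \<phi>1 \<in> hat \<Delta>1 \<and> \<psi>1 \<in> ctr \<phi>1 \<and> vd S1' \<psi>1)
          \<or> (\<exists>S2' \<phi>2 \<psi>2. S2' \<subseteq> \<Gamma> - S \<and> \<phi>2 \<in> hat \<Delta>2 \<and> \<psi>2 \<in> ctr \<phi>2 \<and> vd S2' \<psi>2)"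
proof -
  have P: "\<forall>A1 A2 S1 T1 S2 T2 \<phi> \<psi>.
        A1 \<inter> A2 = {} \<and> finite S1 \<and> finite T1 \<and> finite S2 \<and> finite T2 \<and>
        Atoms atoms S1 \<subseteq> A1 \<and> Atoms atoms T1 \<subseteq> A1 \<and>
        Atoms atoms S2 \<subseteq> A2 \<and> Atoms atoms T2 \<subseteq> A2 \<and>
        \<psi> \<in> ctr \<phi> \<and> \<phi> \<in> hat (T1 \<union> T2) \<and> vd (S1 \<union> S2) \<psi>
        \<longrightarrow> (\<exists>S1' \<phi>1 \<psi>1. S1' \<subseteq> S1 \<and> \<phi>1 \<in> hat T1 \<and> \<psi>1 \<in> ctr \<phi>1 \<and> vd S1' \<psi>1)
          \<or> (\<exists>S2' \<phi>2 \<psi>2. S2' \<subseteq> S2 \<and> \<phi>2 \<in> hat T2 \<and> \<psi>2 \<in> ctr \<phi>2 \<and> vd S2' \<psi>2)"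
    using pr unfolding pre_relevance_def by (elim conjE)
  have U: "(\<Gamma> \<inter> S) \<union> (\<Gamma> - S) = \<Gamma>" by blast
  have c1: "Atoms atoms S \<inter> Atoms atoms S' = {}" using ind unfolding indep_def .
  have c2: "Atoms atoms (\<Gamma> \<inter> S) \<subseteq> Atoms atoms S" by (rule Atoms_mono) blast
  have c3: "Atoms atoms (\<Gamma> - S) \<subseteq> Atoms atoms S'" by (rule Atoms_mono) (use assms(2) in blast)
  have c4: "Atoms atoms \<Delta>1 \<subseteq> Atoms atoms S" by (rule Atoms_mono) (use assms(5) in blast)
  have c5: "Atoms atoms \<Delta>2 \<subseteq> Atoms atoms S'" by (rule Atoms_mono) (use assms(7) in blast)
  have c6: "finite (\<Gamma> \<inter> S)" "finite (\<Gamma> - S)" using assms(1) by auto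
  have c7: "vd ((\<Gamma> \<inter> S) \<union> (\<Gamma> - S)) \<psi>" unfolding U by (rule assms(3))
  show ?thesis
    apply (rule P[rule_format, of "Atoms atoms S" "Atoms atoms S'" "\<Gamma> \<inter> S" \<Delta>1 "\<Gamma> - S" \<Delta>2 \<psi> \<phi>])
    using c1 c2 c3 c4 c5 c6 c7 assms(4,6,8,9) by (intro conjI)
qed


lemma subarg:
  assumes E: "complete_ext (Arg vd B) att E" and c: "c \<in> E" and sub: "\<Gamma>' \<subseteq> fst c"
    and a: "(\<Gamma>', \<psi>) \<in> Arg vd B"
  shows "(\<Gamma>', \<psi>) \<in> E"
proof -
  have cA: "c \<in> Arg vd B" using E c unfolding complete_ext_def by blast
  hence fc: "finite (fst c)" unfolding Arg_iff by blast
  have dc: "defends (Arg vd B) att E c" using E c unfolding complete_ext_def by blast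
  have "defends (Arg vd B) att E (\<Gamma>', \<psi>)"
    unfolding defends_def
  proof (intro ballI impI)
    fix b assume "b \<in> Arg vd B" "att b (\<Gamma>', \<psi>)"
    have "att b (fst c, snd c)" using att_mono[OF \<open>att b (\<Gamma>', \<psi>)\<close> sub fc] .
    thus "\<exists>e\<in>E. att e b" using dc \<open>b \<in> Arg vd B\<close> unfolding defends_def by simp
  qed
  thus ?thesis using E a unfolding complete_ext_def by blast
qed

definition Pr :: "'f set \<Rightarrow> 'f set \<Rightarrow> bool" where
  "Pr B S0 \<longleftrightarrow> S0 \<subseteq> B \<and> (\<forall>\<Gamma> \<psi> \<Delta> \<phi>. finite \<Gamma> \<and> \<Gamma> \<subseteq> B \<and> vd \<Gamma> \<psi> \<and> finite \<Delta> \<and> \<Delta> \<subseteq> S0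
      \<and> \<phi> \<in> hat \<Delta> \<and> \<psi> \<in> ctr \<phi> \<longrightarrow>
     (\<exists>\<Gamma>'. \<Gamma>' \<subseteq> \<Gamma> \<and> \<Gamma>' \<subseteq> S0 \<and> (\<exists>\<psi>'. vd \<Gamma>' \<psi>' \<and> (\<exists>\<phi>'\<in>hat \<Delta>. \<psi>' \<in> ctr \<phi>'))))"

lemma Pr_use:
  assumes "Pr B S0" "b \<in> Arg vd B" "r \<in> Arg vd S0" "att b r"
  shows "\<exists>r'. r' \<in> Arg vd S0 \<and> fst r' \<subseteq> fst b \<and> att r' r"
proof -
  obtain \<phi> where \<phi>: "\<phi> \<in> hat (fst r)" "snd b \<in> ctr \<phi>" using assms(4) unfolding attacks_def by blast
  have FF: "finite (fst b)" "fst b \<subseteq> B" "vd (fst b) (snd b)" "finite (fst r)" "fst r \<subseteq> S0"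
    using assms(2,3) unfolding Arg_iff by auto
  have H: "\<forall>\<Gamma> \<psi> \<Delta> \<phi>. finite \<Gamma> \<and> \<Gamma> \<subseteq> B \<and> vd \<Gamma> \<psi> \<and> finite \<Delta> \<and> \<Delta> \<subseteq> S0
      \<and> \<phi> \<in> hat \<Delta> \<and> \<psi> \<in> ctr \<phi> \<longrightarrow>
     (\<exists>\<Gamma>'. \<Gamma>' \<subseteq> \<Gamma> \<and> \<Gamma>' \<subseteq> S0 \<and> (\<exists>\<psi>'. vd \<Gamma>' \<psi>' \<and> (\<exists>\<phi>'\<in>hat \<Delta>. \<psi>' \<in> ctr \<phi>')))"
    using assms(1) unfolding Pr_def by (rule conjunct2)
  have "\<exists>\<Gamma>'. \<Gamma>' \<subseteq> fst b \<and> \<Gamma>' \<subseteq> S0 \<and> (\<exists>\<psi>'. vd \<Gamma>' \<psi>' \<and> (\<exists>\<phi>'\<in>hat (fst r). \<psi>' \<in> ctr \<phi>'))"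
    using H[rule_format, of "fst b" "snd b" "fst r" \<phi>] FF \<phi> by blast
  then obtain \<Gamma>' \<psi>' \<phi>' where g: "\<Gamma>' \<subseteq> fst b" "\<Gamma>' \<subseteq> S0" "vd \<Gamma>' \<psi>'" "\<phi>' \<in> hat (fst r)" "\<psi>' \<in> ctr \<phi>'"
    by blast
  have "finite \<Gamma>'" using g(1) FF(1) finite_subset by blast
  hence "(\<Gamma>', \<psi>') \<in> Arg vd S0" using g unfolding Arg_def by simp
  moreover have "att (\<Gamma>', \<psi>') r" using g unfolding attacks_def by auto
  ultimately show ?thesis using g(1) by (intro exI[of _ "(\<Gamma>', \<psi>')"]) simp
qed

lemma restrict_complete:
  assumes P: "Pr B S0" and E: "complete_ext (Arg vd B) att E"
  shows "complete_ext (Arg vd S0) att (E \<inter> Arg vd S0)"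
proof -
  have sub: "Arg vd S0 \<subseteq> Arg vd B" using P unfolding Pr_def by (intro Arg_mono) blast
  have EB: "E \<subseteq> Arg vd B" "conflict_free att E" "\<forall>a\<in>E. defends (Arg vd B) att E a"
    "\<forall>a\<in>Arg vd B. defends (Arg vd B) att E a \<longrightarrow> a \<in> E" using E unfolding complete_ext_def by auto
  show ?thesis
    unfolding complete_ext_def
  proof (intro conjI ballI impI)
    show "E \<inter> Arg vd S0 \<subseteq> Arg vd S0" by blast
    show "conflict_free att (E \<inter> Arg vd S0)" using EB(2) unfolding conflict_free_def by blast
  next
    fix a assume a: "a \<in> E \<inter> Arg vd S0"
    show "defends (Arg vd S0) att (E \<inter> Arg vd S0) a"
      unfolding defends_def
    proof (intro ballI impI)
      fix r assume r: "r \<in> Arg vd S0" "att r a"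
      then obtain c where c: "c \<in> E" "att c r" using EB(3) a sub unfolding defends_def by blast
      have "c \<in> Arg vd B" using c EB(1) by blast
      then obtain c' where c': "c' \<in> Arg vd S0" "fst c' \<subseteq> fst c" "att c' r"
        using Pr_use[OF P _ r(1) c(2)] by blast
      have "c' \<in> Arg vd B" using c' sub by blast
      hence "(fst c', snd c') \<in> E" using subarg[OF E c(1), of "fst c'" "snd c'"] c' by simp
      hence "c' \<in> E \<inter> Arg vd S0" using c' by simp
      thus "\<exists>e\<in>E \<inter> Arg vd S0. att e r" using c' by blast
    qed
  next
    fix a assume a: "a \<in> Arg vd S0" "defends (Arg vd S0) att (E \<inter> Arg vd S0) a"
    have "defends (Arg vd B) att E a"
      unfolding defends_def
    proof (intro ballI impI)
      fix b assume b: "b \<in> Arg vd B" "att b a"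
      then obtain r where r: "r \<in> Arg vd S0" "fst r \<subseteq> fst b" "att r a"
        using Pr_use[OF P b(1) a(1) b(2)] by blast
      then obtain c where c: "c \<in> E \<inter> Arg vd S0" "att c r" using a(2) unfolding defends_def by blast
      have "finite (fst b)" using b(1) unfolding Arg_iff by blast
      hence "att c b" using att_mono'[OF c(2) r(2)] by simp
      thus "\<exists>e\<in>E. att e b" using c by auto
    qed
    thus "a \<in> E \<inter> Arg vd S0" using EB(4) a(1) sub by blast
  qed
qed

lemma lift_adm:
  assumes P: "Pr B S0" and E: "complete_ext (Arg vd S0) att E1"
  shows "E1 \<subseteq> Arg vd B \<and> conflict_free att E1 \<and> (\<forall>a\<in>E1. defends (Arg vd B) att E1 a)"
proof (intro conjI ballI)
  have sub: "Arg vd S0 \<subseteq> Arg vd B" using P unfolding Pr_def by (intro Arg_mono) blast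
  show "E1 \<subseteq> Arg vd B" using E sub unfolding complete_ext_def by blast
  show "conflict_free att E1" using E unfolding complete_ext_def by blast
  fix a assume a: "a \<in> E1"
  have aS: "a \<in> Arg vd S0" using a E unfolding complete_ext_def by blast
  have da: "defends (Arg vd S0) att E1 a" using a E unfolding complete_ext_def by blast
  show "defends (Arg vd B) att E1 a"
    unfolding defends_def
  proof (intro ballI impI)
    fix b assume b: "b \<in> Arg vd B" "att b a"
    then obtain r where r: "r \<in> Arg vd S0" "fst r \<subseteq> fst b" "att r a"
      using Pr_use[OF P b(1) aS b(2)] by blast
    then obtain c where c: "c \<in> E1" "att c r" using da unfolding defends_def by blast
    have "finite (fst b)" using b(1) unfolding Arg_iff by blast
    hence "att c b" using att_mono'[OF c(2) r(2)] by simp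
    thus "\<exists>e\<in>E1. att e b" using c by auto
  qed
qed

lemma Pr1: "Pr (S \<union> S') S"
  unfolding Pr_def
proof (intro conjI allI impI)
  show "S \<subseteq> S \<union> S'" by blast
  fix \<Gamma> \<psi> \<Delta> \<phi> assume h: "finite \<Gamma> \<and> \<Gamma> \<subseteq> S \<union> S' \<and> vd \<Gamma> \<psi> \<and> finite \<Delta> \<and> \<Delta> \<subseteq> S \<and> \<phi> \<in> hat \<Delta> \<and> \<psi> \<in> ctr \<phi>"
  hence "(\<exists>S1' \<phi>1 \<psi>1. S1' \<subseteq> \<Gamma> \<inter> S \<and> \<phi>1 \<in> hat \<Delta> \<and> \<psi>1 \<in> ctr \<phi>1 \<and> vd S1' \<psi>1)
          \<or> (\<exists>S2' \<phi>2 \<psi>2. S2' \<subseteq> \<Gamma> - S \<and> \<phi>2 \<in> hat {} \<and> \<psi>2 \<in> ctr \<phi>2 \<and> vd S2' \<psi>2)"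
    using prime_gen[of \<Gamma> \<psi> \<Delta> "{}" \<phi>] by simp
  then obtain S1' \<phi>1 \<psi>1 where g: "S1' \<subseteq> \<Gamma> \<inter> S" "\<phi>1 \<in> hat \<Delta>" "\<psi>1 \<in> ctr \<phi>1" "vd S1' \<psi>1"
    by (auto simp: hat_empty)
  show "\<exists>\<Gamma>'\<subseteq>\<Gamma>. \<Gamma>' \<subseteq> S \<and> (\<exists>\<psi>'. vd \<Gamma>' \<psi>' \<and> (\<exists>\<phi>'\<in>hat \<Delta>. \<psi>' \<in> ctr \<phi>'))"
    using g by (intro exI[of _ S1'] conjI exI[of _ \<psi>1] bexI[of _ \<phi>1]) auto
qed

lemma Pr2: "Pr (S \<union> S') S'"
  unfolding Pr_def
proof (intro conjI allI impI)
  show "S' \<subseteq> S \<union> S'" by blast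
  fix \<Gamma> \<psi> \<Delta> \<phi> assume h: "finite \<Gamma> \<and> \<Gamma> \<subseteq> S \<union> S' \<and> vd \<Gamma> \<psi> \<and> finite \<Delta> \<and> \<Delta> \<subseteq> S' \<and> \<phi> \<in> hat \<Delta> \<and> \<psi> \<in> ctr \<phi>"
  hence "(\<exists>S1' \<phi>1 \<psi>1. S1' \<subseteq> \<Gamma> \<inter> S \<and> \<phi>1 \<in> hat {} \<and> \<psi>1 \<in> ctr \<phi>1 \<and> vd S1' \<psi>1)
          \<or> (\<exists>S2' \<phi>2 \<psi>2. S2' \<subseteq> \<Gamma> - S \<and> \<phi>2 \<in> hat \<Delta> \<and> \<psi>2 \<in> ctr \<phi>2 \<and> vd S2' \<psi>2)"
    using prime_gen[of \<Gamma> \<psi> "{}" \<Delta> \<phi>] by simp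
  then obtain S1' \<phi>1 \<psi>1 where g: "S1' \<subseteq> \<Gamma> - S" "\<phi>1 \<in> hat \<Delta>" "\<psi>1 \<in> ctr \<phi>1" "vd S1' \<psi>1"
    by (auto simp: hat_empty)
  have "S1' \<subseteq> S'" using g(1) h by blast
  thus "\<exists>\<Gamma>'\<subseteq>\<Gamma>. \<Gamma>' \<subseteq> S' \<and> (\<exists>\<psi>'. vd \<Gamma>' \<psi>' \<and> (\<exists>\<phi>'\<in>hat \<Delta>. \<psi>' \<in> ctr \<phi>'))"
    using g by (intro exI[of _ S1'] conjI exI[of _ \<psi>1] bexI[of _ \<phi>1]) auto
qed


lemma def_att: "defends A att X (\<Delta>, u) \<Longrightarrow> r \<in> A \<Longrightarrow> att r (\<Delta>, w) \<Longrightarrow> \<exists>c\<in>X. att c r"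
  unfolding defends_def attacks_def by simp

lemma split_att:
  assumes b: "b \<in> Arg vd (S \<union> S')" and a: "a \<in> Arg vd (S \<union> S')" and ba: "att b a"
  shows "(\<exists>r\<in>Arg vd S. fst r \<subseteq> fst b \<and> att r (fst a \<inter> S, undefined))
       \<or> (\<exists>r\<in>Arg vd S'. fst r \<subseteq> fst b - S \<and> att r (fst a - S, undefined))"
proof -
  obtain \<phi> where \<phi>: "\<phi> \<in> hat (fst a)" "snd b \<in> ctr \<phi>" using ba unfolding attacks_def by blast
  have fb: "finite (fst b)" "fst b \<subseteq> S \<union> S'" "vd (fst b) (snd b)" using b unfolding Arg_iff by auto
  have fa: "finite (fst a)" "fst a \<subseteq> S \<union> S'" using a unfolding Arg_iff by auto
  have U: "(fst a \<inter> S) \<union> (fst a - S) = fst a" by blast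
  have "\<phi> \<in> hat ((fst a \<inter> S) \<union> (fst a - S))" unfolding U by (rule \<phi>(1))
  moreover have "finite (fst a \<inter> S)" "finite (fst a - S)" "fst a \<inter> S \<subseteq> S" "fst a - S \<subseteq> S'"
    using fa by auto
  ultimately have "(\<exists>S1' \<phi>1 \<psi>1. S1' \<subseteq> fst b \<inter> S \<and> \<phi>1 \<in> hat (fst a \<inter> S) \<and> \<psi>1 \<in> ctr \<phi>1 \<and> vd S1' \<psi>1)
          \<or> (\<exists>S2' \<phi>2 \<psi>2. S2' \<subseteq> fst b - S \<and> \<phi>2 \<in> hat (fst a - S) \<and> \<psi>2 \<in> ctr \<phi>2 \<and> vd S2' \<psi>2)"
    using prime_gen[of "fst b" "snd b" "fst a \<inter> S" "fst a - S" \<phi>] fb \<phi>(2) by blast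
  thus ?thesis
  proof (elim disjE exE conjE)
    fix S1' \<phi>1 \<psi>1 assume g: "S1' \<subseteq> fst b \<inter> S" "\<phi>1 \<in> hat (fst a \<inter> S)" "\<psi>1 \<in> ctr \<phi>1" "vd S1' \<psi>1"
    have "finite S1'" using g(1) fb(1) finite_subset by blast
    hence "(S1', \<psi>1) \<in> Arg vd S" using g unfolding Arg_def by auto
    moreover have "att (S1', \<psi>1) (fst a \<inter> S, undefined)" using g unfolding attacks_def by auto
    ultimately have "\<exists>r\<in>Arg vd S. fst r \<subseteq> fst b \<and> att r (fst a \<inter> S, undefined)"
      using g(1) by (intro bexI[of _ "(S1', \<psi>1)"]) auto
    thus ?thesis by (rule disjI1)
  next
    fix S1' \<phi>1 \<psi>1 assume g: "S1' \<subseteq> fst b - S" "\<phi>1 \<in> hat (fst a - S)" "\<psi>1 \<in> ctr \<phi>1" "vd S1' \<psi>1"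
    have "finite S1'" using g(1) fb(1) finite_subset by blast
    moreover have "S1' \<subseteq> S'" using g(1) fb(2) by blast
    ultimately have "(S1', \<psi>1) \<in> Arg vd S'" using g unfolding Arg_def by auto
    moreover have "att (S1', \<psi>1) (fst a - S, undefined)" using g unfolding attacks_def by auto
    ultimately have "\<exists>r\<in>Arg vd S'. fst r \<subseteq> fst b - S \<and> att r (fst a - S, undefined)"
      using g(1) by (intro bexI[of _ "(S1', \<psi>1)"]) auto
    thus ?thesis by (rule disjI2)
  qed
qed

definition Ext :: "('f set \<times> 'f) set \<Rightarrow> ('f set \<times> 'f) set \<Rightarrow> ('f set \<times> 'f) set" where
  "Ext E1 G2 = {a \<in> Arg vd (S \<union> S'). defends (Arg vd S) att E1 (fst a \<inter> S, undefined)
      \<and> defends (Arg vd S') att G2 (fst a - S, undefined)}"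

lemma ArgS_big: "Arg vd S \<subseteq> Arg vd (S \<union> S')" "Arg vd S' \<subseteq> Arg vd (S \<union> S')"
  by (rule Arg_mono, blast)+

lemma Ext_sub1:
  assumes E1: "complete_ext (Arg vd S) att E1"
  shows "E1 \<subseteq> Ext E1 G2"
proof
  fix c assume c: "c \<in> E1"
  have cA: "c \<in> Arg vd S" using c E1 unfolding complete_ext_def by blast
  hence e1: "fst c \<inter> S = fst c" "fst c - S = {}" unfolding Arg_iff by auto
  have "defends (Arg vd S) att E1 (fst c, snd c)" using c E1 unfolding complete_ext_def by simp
  hence "defends (Arg vd S) att E1 (fst c \<inter> S, undefined)" unfolding e1 using defends_snd by blast
  moreover have "defends (Arg vd S') att G2 (fst c - S, undefined)" unfolding e1 by (rule defends_empty)
  ultimately show "c \<in> Ext E1 G2" unfolding Ext_def using cA ArgS_big by blast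
qed

lemma Ext_sub2:
  assumes G2: "complete_ext (Arg vd S') att G2"
  shows "G2 \<subseteq> Ext E1 G2"
proof
  fix d assume d: "d \<in> G2"
  have dA: "d \<in> Arg vd S'" using d G2 unfolding complete_ext_def by blast
  have fd: "finite (fst d)" "fst d \<subseteq> S'" using dA unfolding Arg_iff by auto
  have dd: "defends (Arg vd S') att G2 (fst d, snd d)" using d G2 unfolding complete_ext_def by simp
  have "defends (Arg vd S') att G2 (fst d - S, undefined)"
    by (rule defends_anti[OF fd(1) _ dd]) blast
  moreover have "defends (Arg vd S) att E1 (fst d \<inter> S, undefined)"
    unfolding defends_def
  proof (intro ballI impI)
    fix r assume r: "r \<in> Arg vd S" "att r (fst d \<inter> S, undefined)"
    obtain \<phi> where \<phi>: "\<phi> \<in> hat (fst d \<inter> S)" "snd r \<in> ctr \<phi>" using r(2) unfolding attacks_def by auto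
    have fr: "finite (fst r)" "fst r \<subseteq> S" "vd (fst r) (snd r)" using r(1) unfolding Arg_iff by auto
    have "\<phi> \<in> hat ({} \<union> (fst d \<inter> S))" using \<phi>(1) by simp
    moreover have "finite (fst d \<inter> S)" "fst d \<inter> S \<subseteq> S'" "fst r \<subseteq> S \<union> S'" using fd fr by auto
    ultimately have "(\<exists>S1' \<phi>1 \<psi>1. S1' \<subseteq> fst r \<inter> S \<and> \<phi>1 \<in> hat {} \<and> \<psi>1 \<in> ctr \<phi>1 \<and> vd S1' \<psi>1)
          \<or> (\<exists>S2' \<phi>2 \<psi>2. S2' \<subseteq> fst r - S \<and> \<phi>2 \<in> hat (fst d \<inter> S) \<and> \<psi>2 \<in> ctr \<phi>2 \<and> vd S2' \<psi>2)"
      using prime_gen[of "fst r" "snd r" "{}" "fst d \<inter> S" \<phi>] fr \<phi>(2) by blast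
    then obtain S2' \<phi>2 \<psi>2 where g: "S2' \<subseteq> fst r - S" "\<phi>2 \<in> hat (fst d \<inter> S)" "\<psi>2 \<in> ctr \<phi>2" "vd S2' \<psi>2"
      by (auto simp: hat_empty)
    have "S2' = {}" using g(1) fr(2) by blast
    hence eA: "({}, \<psi>2) \<in> Arg vd S'" using g(4) unfolding Arg_def by auto
    have "att ({}, \<psi>2) (fst d \<inter> S, undefined)" using g(2,3) unfolding attacks_def by auto
    hence "att ({}, \<psi>2) d" by (rule att_mono') (use fd in auto)
    then obtain c where "c \<in> G2" "att c ({}, \<psi>2)" using def_att[OF dd eA] by (metis prod.collapse)
    hence False using no_att_empty by blast
    thus "\<exists>c\<in>E1. att c r" ..
  qed
  ultimately show "d \<in> Ext E1 G2" unfolding Ext_def using dA ArgS_big by blast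
qed


lemma att_from_big2:
  assumes b: "b \<in> Arg vd (S \<union> S')" and r: "r \<in> Arg vd S'" and br: "att b r"
  shows "\<exists>r'\<in>Arg vd S'. fst r' \<subseteq> fst b - S \<and> att r' r"
proof -
  obtain \<phi> where \<phi>: "\<phi> \<in> hat (fst r)" "snd b \<in> ctr \<phi>" using br unfolding attacks_def by blast
  have fb: "finite (fst b)" "fst b \<subseteq> S \<union> S'" "vd (fst b) (snd b)" using b unfolding Arg_iff by auto
  have fr: "finite (fst r)" "fst r \<subseteq> S'" using r unfolding Arg_iff by auto
  have "\<phi> \<in> hat ({} \<union> fst r)" using \<phi>(1) by simp
  hence "(\<exists>S1' \<phi>1 \<psi>1. S1' \<subseteq> fst b \<inter> S \<and> \<phi>1 \<in> hat {} \<and> \<psi>1 \<in> ctr \<phi>1 \<and> vd S1' \<psi>1)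
          \<or> (\<exists>S2' \<phi>2 \<psi>2. S2' \<subseteq> fst b - S \<and> \<phi>2 \<in> hat (fst r) \<and> \<psi>2 \<in> ctr \<phi>2 \<and> vd S2' \<psi>2)"
    using prime_gen[of "fst b" "snd b" "{}" "fst r" \<phi>] fb fr \<phi>(2) by blast
  then obtain S2' \<phi>2 \<psi>2 where g: "S2' \<subseteq> fst b - S" "\<phi>2 \<in> hat (fst r)" "\<psi>2 \<in> ctr \<phi>2" "vd S2' \<psi>2"
    by (auto simp: hat_empty)
  have "finite S2'" using g(1) fb(1) finite_subset by blast
  moreover have "S2' \<subseteq> S'" using g(1) fb(2) by blast
  ultimately have "(S2', \<psi>2) \<in> Arg vd S'" using g unfolding Arg_def by auto
  moreover have "att (S2', \<psi>2) r" using g unfolding attacks_def by auto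
  ultimately show ?thesis using g(1) by (intro bexI[of _ "(S2', \<psi>2)"]) auto
qed

lemma Ext_defX:
  assumes E1: "complete_ext (Arg vd S) att E1" and G2: "complete_ext (Arg vd S') att G2"
    and X: "E1 \<subseteq> X" "G2 \<subseteq> X" and a: "a \<in> Ext E1 G2"
  shows "defends (Arg vd (S \<union> S')) att X a"
  unfolding defends_def
proof (intro ballI impI)
  fix b assume b: "b \<in> Arg vd (S \<union> S')" "att b a"
  have aA: "a \<in> Arg vd (S \<union> S')" and d1: "defends (Arg vd S) att E1 (fst a \<inter> S, undefined)"
    and d2: "defends (Arg vd S') att G2 (fst a - S, undefined)" using a unfolding Ext_def by auto
  have fb: "finite (fst b)" using b(1) unfolding Arg_iff by blast
  from split_att[OF b(1) aA b(2)] show "\<exists>c\<in>X. att c b"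
  proof (elim disjE bexE conjE)
    fix r assume r: "r \<in> Arg vd S" "fst r \<subseteq> fst b" "att r (fst a \<inter> S, undefined)"
    obtain c where c: "c \<in> E1" "att c r" using def_att[OF d1 r(1) r(3)] by blast
    have "att c b" using att_mono'[OF c(2) r(2) fb] .
    thus ?thesis using c X by blast
  next
    fix r assume r: "r \<in> Arg vd S'" "fst r \<subseteq> fst b - S" "att r (fst a - S, undefined)"
    obtain c where c: "c \<in> G2" "att c r" using def_att[OF d2 r(1) r(3)] by blast
    have "fst r \<subseteq> fst b" using r(2) by blast
    hence "att c b" using att_mono'[OF c(2) _ fb] by blast
    thus ?thesis using c X by blast
  qed
qed

lemma Ext_complete:
  assumes E1: "complete_ext (Arg vd S) att E1" and G2: "complete_ext (Arg vd S') att G2"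
  shows "complete_ext (Arg vd (S \<union> S')) att (Ext E1 G2)"
  unfolding complete_ext_def
proof (intro conjI ballI impI)
  show "Ext E1 G2 \<subseteq> Arg vd (S \<union> S')" unfolding Ext_def by blast
  have cf1: "conflict_free att E1" and s1: "E1 \<subseteq> Arg vd S" using E1 unfolding complete_ext_def by auto
  have cf2: "conflict_free att G2" and s2: "G2 \<subseteq> Arg vd S'" using G2 unfolding complete_ext_def by auto
  show "conflict_free att (Ext E1 G2)"
    unfolding conflict_free_def
  proof (intro ballI notI)
    fix x y assume x: "x \<in> Ext E1 G2" and y: "y \<in> Ext E1 G2" and xy: "att x y"
    have xA: "x \<in> Arg vd (S \<union> S')" and dx1: "defends (Arg vd S) att E1 (fst x \<inter> S, undefined)"
      and dx2: "defends (Arg vd S') att G2 (fst x - S, undefined)" using x unfolding Ext_def by auto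
    have yA: "y \<in> Arg vd (S \<union> S')" and dy1: "defends (Arg vd S) att E1 (fst y \<inter> S, undefined)"
      and dy2: "defends (Arg vd S') att G2 (fst y - S, undefined)" using y unfolding Ext_def by auto
    have fx: "finite (fst x)" using xA unfolding Arg_iff by blast
    from split_att[OF xA yA xy] show False
    proof (elim disjE bexE conjE)
      fix r assume r: "r \<in> Arg vd S" "fst r \<subseteq> fst x" "att r (fst y \<inter> S, undefined)"
      obtain c where c: "c \<in> E1" "att c r" using def_att[OF dy1 r(1) r(3)] by blast
      have "fst r \<subseteq> S" using r(1) unfolding Arg_iff by blast
      hence "fst r \<subseteq> fst (fst x \<inter> S, undefined::'f)" using r(2) by auto
      hence "att c (fst x \<inter> S, undefined)" using att_mono'[OF c(2)] fx by auto
      moreover have "c \<in> Arg vd S" using c(1) s1 by blast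
      ultimately obtain d where "d \<in> E1" "att d c" using def_att[OF dx1] by blast
      thus False using cf1 c(1) unfolding conflict_free_def by blast
    next
      fix r assume r: "r \<in> Arg vd S'" "fst r \<subseteq> fst x - S" "att r (fst y - S, undefined)"
      obtain c where c: "c \<in> G2" "att c r" using def_att[OF dy2 r(1) r(3)] by blast
      have "fst r \<subseteq> fst (fst x - S, undefined::'f)" using r(2) by auto
      hence "att c (fst x - S, undefined)" using att_mono'[OF c(2)] fx by auto
      moreover have "c \<in> Arg vd S'" using c(1) s2 by blast
      ultimately obtain d where "d \<in> G2" "att d c" using def_att[OF dx2] by blast
      thus False using cf2 c(1) unfolding conflict_free_def by blast
    qed
  qed
next
  fix a assume "a \<in> Ext E1 G2"
  thus "defends (Arg vd (S \<union> S')) att (Ext E1 G2) a"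
    using Ext_defX[OF E1 G2 Ext_sub1[OF E1] Ext_sub2[OF G2]] by blast
next
  fix a assume aA: "a \<in> Arg vd (S \<union> S')" and da: "defends (Arg vd (S \<union> S')) att (Ext E1 G2) a"
  have fa: "finite (fst a)" using aA unfolding Arg_iff by blast
  have "defends (Arg vd S) att E1 (fst a \<inter> S, undefined)"
    unfolding defends_def
  proof (intro ballI impI)
    fix r assume r: "r \<in> Arg vd S" "att r (fst a \<inter> S, undefined)"
    have "att r a" by (rule att_mono'[OF r(2)]) (use fa in auto)
    moreover have rB: "r \<in> Arg vd (S \<union> S')" using r(1) ArgS_big by blast
    ultimately obtain e where e: "e \<in> Ext E1 G2" "att e r" using da unfolding defends_def by blast
    have eA: "e \<in> Arg vd (S \<union> S')" and de: "defends (Arg vd S) att E1 (fst e \<inter> S, undefined)"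
      using e(1) unfolding Ext_def by auto
    obtain r' where r': "r' \<in> Arg vd S" "fst r' \<subseteq> fst e" "att r' r" using Pr_use[OF Pr1 eA r(1) e(2)] by blast
    have "fst r' \<subseteq> S" using r'(1) unfolding Arg_iff by blast
    hence "fst r' \<subseteq> fst e \<inter> S" using r'(2) by blast
    moreover have "finite (fst e \<inter> S)" using eA unfolding Arg_iff by auto
    ultimately have "defends (Arg vd S) att E1 (fst r', snd r')" using defends_anti de by blast
    hence "r' \<in> E1" using E1 r'(1) unfolding complete_ext_def by simp
    thus "\<exists>c\<in>E1. att c r" using r'(3) by blast
  qed
  moreover have "defends (Arg vd S') att G2 (fst a - S, undefined)"
    unfolding defends_def
  proof (intro ballI impI)
    fix r assume r: "r \<in> Arg vd S'" "att r (fst a - S, undefined)"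
    have "att r a" by (rule att_mono'[OF r(2)]) (use fa in auto)
    moreover have rB: "r \<in> Arg vd (S \<union> S')" using r(1) ArgS_big by blast
    ultimately obtain e where e: "e \<in> Ext E1 G2" "att e r" using da unfolding defends_def by blast
    have eA: "e \<in> Arg vd (S \<union> S')" and de: "defends (Arg vd S') att G2 (fst e - S, undefined)"
      using e(1) unfolding Ext_def by auto
    obtain r' where r': "r' \<in> Arg vd S'" "fst r' \<subseteq> fst e - S" "att r' r" using att_from_big2[OF eA r(1) e(2)] by blast
    have "finite (fst e - S)" using eA unfolding Arg_iff by auto
    hence "defends (Arg vd S') att G2 (fst r', snd r')" using defends_anti de r'(2) by blast
    hence "r' \<in> G2" using G2 r'(1) unfolding complete_ext_def by simp
    thus "\<exists>c\<in>G2. att c r" using r'(3) by blast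
  qed
  ultimately show "a \<in> Ext E1 G2" unfolding Ext_def using aA by blast
qed

lemma Ext_restrict:
  assumes E1: "complete_ext (Arg vd S) att E1"
  shows "E1 = Ext E1 G2 \<inter> Arg vd S"
proof
  show "E1 \<subseteq> Ext E1 G2 \<inter> Arg vd S" using Ext_sub1[OF E1] E1 unfolding complete_ext_def by blast
  show "Ext E1 G2 \<inter> Arg vd S \<subseteq> E1"
  proof
    fix a assume a: "a \<in> Ext E1 G2 \<inter> Arg vd S"
    hence "a \<in> Arg vd S" by blast
    hence "fst a \<subseteq> S" unfolding Arg_iff by blast
    hence "fst a \<inter> S = fst a" by blast
    moreover have "defends (Arg vd S) att E1 (fst a \<inter> S, undefined)" using a unfolding Ext_def by auto
    ultimately have "defends (Arg vd S) att E1 (fst a, snd a)" using defends_snd by metis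
    thus "a \<in> E1" using E1 a unfolding complete_ext_def by simp
  qed
qed

lemma Ext_grounded:
  assumes E1: "grounded_ext (Arg vd S) att E1" and G2: "grounded_ext (Arg vd S') att G2"
  shows "grounded_ext (Arg vd (S \<union> S')) att (Ext E1 G2)"
proof -
  have E1c: "complete_ext (Arg vd S) att E1" and G2c: "complete_ext (Arg vd S') att G2"
    using E1 G2 unfolding grounded_ext_def by auto
  show ?thesis
    unfolding grounded_ext_def
  proof (intro conjI allI impI Ext_complete[OF E1c G2c])
    fix E' assume E': "complete_ext (Arg vd (S \<union> S')) att E'"
    have "E1 \<subseteq> E' \<inter> Arg vd S" using E1 restrict_complete[OF Pr1 E'] unfolding grounded_ext_def by blast
    moreover have "G2 \<subseteq> E' \<inter> Arg vd S'" using G2 restrict_complete[OF Pr2 E'] unfolding grounded_ext_def by blast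
    ultimately have X: "E1 \<subseteq> E'" "G2 \<subseteq> E'" by auto
    show "Ext E1 G2 \<subseteq> E'"
    proof
      fix a assume a: "a \<in> Ext E1 G2"
      have "defends (Arg vd (S \<union> S')) att E' a" by (rule Ext_defX[OF E1c G2c X a])
      moreover have "a \<in> Arg vd (S \<union> S')" using a unfolding Ext_def by blast
      ultimately show "a \<in> E'" using E' unfolding complete_ext_def by blast
    qed
  qed
qed

end

theorem lemma7:
  fixes atoms :: "'f \<Rightarrow> 'a set"
    and vd :: "'f set \<Rightarrow> 'f \<Rightarrow> bool"
    and ctr :: "'f \<Rightarrow> 'f set"
    and hat :: "'f set \<Rightarrow> 'f set"
    and S S' :: "'f set"
    and s :: semantics
    and E1 :: "('f set \<times> 'f) set"
  assumes "\<forall>\<phi>. finite (atoms \<phi>)"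
    and "setting hat"
    and "pre_relevance atoms vd ctr hat"
    and "indep atoms S S'"
    and "E1 \<in> Sem s vd ctr hat S"
  shows "\<exists>E \<in> Sem s vd ctr hat (S \<union> S'). E1 = E \<inter> Arg vd S"
proof -
  interpret RL atoms vd ctr hat S S' using assms(2,3,4) by unfold_locales
  obtain G2 where G2: "grounded_ext (Arg vd S') (attacks ctr hat) G2" using exists_grounded by blast
  hence G2c: "complete_ext (Arg vd S') (attacks ctr hat) G2" unfolding grounded_ext_def by blast
  have E1s: "ext s (Arg vd S) (attacks ctr hat) E1" using assms(5) unfolding Sem_def by simp
  show ?thesis
  proof (cases s)
    case Cmp
    hence E1c: "complete_ext (Arg vd S) (attacks ctr hat) E1" using E1s by simp
    have "Ext E1 G2 \<in> Sem s vd ctr hat (S \<union> S')"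
      unfolding Sem_def using Ext_complete[OF E1c G2c] Cmp by simp
    thus ?thesis using Ext_restrict[OF E1c] by blast
  next
    case Grd
    hence E1g: "grounded_ext (Arg vd S) (attacks ctr hat) E1" using E1s by simp
    hence E1c: "complete_ext (Arg vd S) (attacks ctr hat) E1" unfolding grounded_ext_def by blast
    have "Ext E1 G2 \<in> Sem s vd ctr hat (S \<union> S')"
      unfolding Sem_def using Ext_grounded[OF E1g G2] Grd by simp
    thus ?thesis using Ext_restrict[OF E1c] by blast
  next
    case Prf
    hence E1p: "preferred_ext (Arg vd S) (attacks ctr hat) E1" using E1s by simp
    hence E1c: "complete_ext (Arg vd S) (attacks ctr hat) E1" unfolding preferred_ext_def by blast
    have adm: "E1 \<subseteq> Arg vd (S \<union> S') \<and> conflict_free (attacks ctr hat) E1 \<and>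
       (\<forall>a\<in>E1. defends (Arg vd (S \<union> S')) (attacks ctr hat) E1 a)"
      by (rule lift_adm[OF Pr1 E1c])
    then obtain E where E: "preferred_ext (Arg vd (S \<union> S')) (attacks ctr hat) E" "E1 \<subseteq> E"
      using exists_preferred[of E1 "Arg vd (S \<union> S')" "attacks ctr hat"] by blast
    have Ec: "complete_ext (Arg vd (S \<union> S')) (attacks ctr hat) E" using E(1) unfolding preferred_ext_def by blast
    have R: "complete_ext (Arg vd S) (attacks ctr hat) (E \<inter> Arg vd S)" by (rule restrict_complete[OF Pr1 Ec])
    have "E1 \<subseteq> E \<inter> Arg vd S" using E(2) E1c unfolding complete_ext_def by blast
    hence "E \<inter> Arg vd S = E1" using E1p R unfolding preferred_ext_def by blast
    moreover have "E \<in> Sem s vd ctr hat (S \<union> S')" unfolding Sem_def using E(1) Prf by simp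
    ultimately show ?thesis by blast
  qed
qed

end
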